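(* Let $1<q\le p<r\le s<\infty$ and let $\mu$ be a finite measure on $(X,\Sigma)$, $X=(0,1)$. If $L^{p,q)}(X,\mu)\subseteq L^{r,s)}(X,\mu)$, then there is a constant $M>0$ such that $\mu(A)\ge M$ for every $A\in\Sigma$ with $\mu(A)>0$.
   Context: $X=(0,1)$ with a $\sigma$-algebra $\Sigma$. For a measurable $f$ on $X$, $\lambda_f(y)=\mu\{x:|f(x)|>y\}$ ($y>0$) and $f^*(t)=\inf\{y>0:\lambda_f(y)\le t\}$ ($t>0$). For $1<p<\infty$, $1<q<\infty$, $L^{p,q)}(X,\mu)$ consists of measurable $f$ with $\|f\|_{p,q),\mu}=\sup_{0<\varepsilon<q-1}\big(\frac qp\varepsilon\int_0^1 t^{\frac qp-1}[f^*(t)]^{q-\varepsilon}dt\big)^{1/(q-\varepsilon)}<\infty$; $L^{r,s)}(X,\mu)$ is defined likewise with $r,s$. *)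

theory Defs
  imports "HOL-Analysis.Analysis"
begin

definition distrib_fun :: "real measure \<Rightarrow> (real \<Rightarrow> real) \<Rightarrow> real \<Rightarrow> real" where
  "distrib_fun \<mu> f y = measure \<mu> {x \<in> space \<mu>. \<bar>f x\<bar> > y}"

definition rearr :: "real measure \<Rightarrow> (real \<Rightarrow> real) \<Rightarrow> real \<Rightarrow> real" where
  "rearr \<mu> f t = Inf {y. y > 0 \<and> distrib_fun \<mu> f y \<le> t}"

definition glz_integral :: "real measure \<Rightarrow> real \<Rightarrow> real \<Rightarrow> real \<Rightarrow> (real \<Rightarrow> real) \<Rightarrow> ennreal" where
  "glz_integral \<mu> p q \<epsilon> f =
     (\<integral>\<^sup>+ t \<in> {0<..<1}. ennreal (t powr (q / p - 1) * (rearr \<mu> f t) powr (q - \<epsilon>)) \<partial>lborel)"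

definition grand_lorentz :: "real measure \<Rightarrow> real \<Rightarrow> real \<Rightarrow> (real \<Rightarrow> real) set" where
  "grand_lorentz \<mu> p q =
     {f \<in> borel_measurable \<mu>. \<exists>C::real. \<forall>\<epsilon>. 0 < \<epsilon> \<and> \<epsilon> < q - 1 \<longrightarrow>
        glz_integral \<mu> p q \<epsilon> f < \<infinity> \<and>
        ((q / p) * \<epsilon> * enn2real (glz_integral \<mu> p q \<epsilon> f)) powr (1 / (q - \<epsilon>)) \<le> C}"

end

theory Submission
  imports Defs
begin

lemma rearr_le:
  assumes "0 < y" "distrib_fun \<mu> f y \<le> t"
  shows "rearr \<mu> f t \<le> y"
  unfolding rearr_def
  by (rule cInf_lower) (use assms in \<open>auto intro!: bdd_belowI[of _ 0]\<close>)

lemma rearr_ge: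
  assumes "\<exists>y>0. distrib_fun \<mu> f y \<le> t"
    and "\<And>y. 0 < y \<Longrightarrow> y < c \<Longrightarrow> t < distrib_fun \<mu> f y"
  shows "c \<le> rearr \<mu> f t"
  unfolding rearr_def
  by (rule cInf_greatest) (use assms in \<open>force simp: not_less[symmetric]\<close>)+

lemma rearr_nonneg:
  assumes "\<exists>y>0. distrib_fun \<mu> f y \<le> t"
  shows "0 \<le> rearr \<mu> f t"
  using rearr_ge[of \<mu> f t 0] assms by auto

lemma powr_le_max:
  fixes x Q e :: real
  assumes "0 \<le> x" "x \<le> Q" "0 < e" "e \<le> 1"
  shows "x powr e \<le> max 1 Q"
proof (cases "x \<le> 1")
  case True
  hence "x powr e \<le> 1 powr e" using assms by (intro powr_mono2) auto
  thus ?thesis by simp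
next
  case False
  hence "x powr e \<le> x powr 1" using assms by (intro powr_mono) auto
  thus ?thesis using False assms by simp
qed

lemma one_le_powr_neg:
  fixes x a :: real
  assumes "0 < x" "x \<le> 1" "a \<le> 0"
  shows "1 \<le> x powr a"
  using powr_mono2'[OF assms(3) assms(1) assms(2)] by simp

lemma powr_integral_Ioo:
  fixes a c M :: real
  assumes "0 < a" "0 < c" "0 \<le> M"
  shows "(\<integral>\<^sup>+ t \<in> {0<..<a}. ennreal (M * t powr (c - 1)) \<partial>lborel) = ennreal (M * (a powr c / c))"
proof -
  have "((\<lambda>x. x powr (c-1)) has_integral (a powr (c - 1 + 1) / (c - 1 + 1))) {0..a}"
    using assms by (intro has_integral_powr_from_0) auto
  hence "((\<lambda>x. x powr (c-1)) has_integral (a powr c / c)) {0<..<a}"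
    by (simp add: has_integral_Icc_iff_Ioo)
  hence I: "((\<lambda>x. M * x powr (c-1)) has_integral (M * (a powr c / c))) {0<..<a}"
    by (rule has_integral_mult_right)
  have "(\<integral>\<^sup>+ t. ennreal (indicator {0<..<a} t * (M * t powr (c - 1))) \<partial>lborel) = ennreal (M * (a powr c / c))"
    by (rule nn_integral_has_integral_lebesgue[OF _ I]) (use assms in auto)
  thus ?thesis
    by (simp add: indicator_mult_ennreal mult.commute)
qed

theorem theorem3p5:
  fixes \<mu> :: "real measure" and p q r s :: real
  assumes "space \<mu> = {0<..<1}"
    and "finite_measure \<mu>"
    and "1 < q" "q \<le> p" "p < r" "r \<le> s"
    and "grand_lorentz \<mu> p q \<subseteq> grand_lorentz \<mu> r s"
  shows "\<exists>M>0. \<forall>A \<in> sets \<mu>. measure \<mu> A > 0 \<longrightarrow> measure \<mu> A \<ge> M"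
proof (rule ccontr)
  assume neg: "\<not> ?thesis"
  interpret finite_measure \<mu> by fact
  have small: "\<exists>A. A \<in> sets \<mu> \<and> 0 < measure \<mu> A \<and> measure \<mu> A < M" if "M > 0" for M
    using neg that by (meson not_le)
  define g where "g M = (SOME A. A \<in> sets \<mu> \<and> 0 < measure \<mu> A \<and> measure \<mu> A < M)" for M
  have g: "g M \<in> sets \<mu> \<and> 0 < measure \<mu> (g M) \<and> measure \<mu> (g M) < M" if "M > 0" for M
    unfolding g_def using someI_ex[OF small[OF that]] .
  define B where "B = rec_nat (g 1) (\<lambda>_ A. g (measure \<mu> A / 4))"
  have B0: "B 0 = g 1" and BS: "B (Suc k) = g (measure \<mu> (B k) / 4)" for k
    by (simp_all add: B_def)
  define b where "b k = measure \<mu> (B k)" for k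
  have Bp: "B k \<in> sets \<mu> \<and> 0 < b k \<and> b k < 1" for k
  proof (induction k)
    case 0 thus ?case using g[of 1] by (simp add: B0 b_def)
  next
    case (Suc k)
    hence "measure \<mu> (B k) / 4 > 0" by (simp add: b_def)
    from g[OF this] Suc show ?case by (simp add: BS b_def)
  qed
  have Bsets: "B k \<in> sets \<mu>" and bpos: "0 < b k" and blt1: "b k < 1" for k using Bp by auto
  have bS: "b (Suc k) < b k / 4" for k
    using g[of "measure \<mu> (B k) / 4"] bpos[of k] by (simp add: BS b_def)
  have bdec: "b (m + j) \<le> b m / 4 ^ j" for m j
  proof (induction j)
    case 0 thus ?case by simp
  next
    case (Suc j)
    have "b (m + Suc j) \<le> b (m + j) / 4" using bS[of "m + j"] by simp
    also have "\<dots> \<le> b m / 4 ^ Suc j" using Suc by (simp add: field_simps)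
    finally show ?case .
  qed
  have bmono: "i \<le> j \<Longrightarrow> b j \<le> b i" for i j
    using bdec[of i "j - i"] bpos[of i] by (simp add: field_simps)
      (smt (verit) le_add_diff_inverse one_le_power mult_le_cancel_left1)
  have bsmall: "b k \<le> (1/4) ^ k" for k
    using bdec[of 0 k] blt1[of 0] by (simp add: field_simps power_one_over)
  define U where "U k = (\<Union>j. B (Suc k + j))" for k
  have Usets: "U k \<in> sets \<mu>" for k unfolding U_def using Bsets by auto
  have U_le: "measure \<mu> (U k) \<le> 4/3 * b (Suc k)" for k
  proof -
    have le: "b (Suc k + j) \<le> b (Suc k) * (1/4) ^ j" for j
      using bdec[of "Suc k" j] by (simp add: field_simps power_one_over)
    have sg: "summable (\<lambda>j. b (Suc k) * (1/4::real) ^ j)"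
      by (intro summable_mult summable_geometric) auto
    have sb: "summable (\<lambda>j. b (Suc k + j))"
      by (rule summable_comparison_test'[OF sg]) (use le bpos in \<open>auto simp: less_imp_le\<close>)
    have "measure \<mu> (U k) \<le> (\<Sum>j. b (Suc k + j))"
      unfolding U_def b_def
      by (rule finite_measure_subadditive_countably) (use Bsets sb in \<open>auto simp: b_def\<close>)
    also have "\<dots> \<le> (\<Sum>j. b (Suc k) * (1/4::real) ^ j)"
      by (rule suminf_le[OF le sb sg])
    also have "\<dots> = b (Suc k) * (4/3)"
      by (subst suminf_mult[OF summable_geometric]) (auto simp: suminf_geometric)
    finally show ?thesis by simp
  qed
  have U_le2: "measure \<mu> (U k) \<le> b k / 3" for k
    using U_le[of k] bS[of k] by simp
  define E where "E k = B k - U k" for k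
  have Esets: "E k \<in> sets \<mu>" for k unfolding E_def using Bsets Usets by auto
  have Emeas: "2/3 * b k \<le> measure \<mu> (E k)" for k
  proof -
    have "measure \<mu> (E k) = b k - measure \<mu> (B k \<inter> U k)"
      unfolding E_def b_def by (rule finite_measure_Diff'[OF Bsets Usets])
    moreover have "measure \<mu> (B k \<inter> U k) \<le> measure \<mu> (U k)"
      by (rule finite_measure_mono) (use Usets in auto)
    ultimately show ?thesis using U_le2[of k] by simp
  qed
  have EU: "E j \<subseteq> U k" if "k < j" for j k
  proof -
    have "B j = B (Suc k + (j - Suc k))" using that by simp
    thus ?thesis unfolding E_def U_def by blast
  qed
  have Edisj: "x \<in> E i \<Longrightarrow> x \<in> E j \<Longrightarrow> i = j" for x i j
  proof (rule ccontr)
    assume "x \<in> E i" "x \<in> E j" "i \<noteq> j"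
    thus False using EU[of i j] EU[of j i] unfolding E_def by (cases "i < j") auto
  qed
  have Esub: "E k \<subseteq> space \<mu>" for k using sets.sets_into_space[OF Esets] .
  define \<alpha> where "\<alpha> = (1/r + 1/p) / 2"
  have p0: "0 < p" using assms by linarith
  have r0: "0 < r" using assms by linarith
  have invpr: "1/r < 1/p" using assms p0 by (simp add: frac_less2)
  have al1: "1/r < \<alpha>" "\<alpha> < 1/p" using invpr unfolding \<alpha>_def by auto
  have al0: "0 < \<alpha>" using al1 r0 by (smt (verit) divide_pos_pos)
  define C where "C k = b k powr (- \<alpha>)" for k
  have Cpos: "0 < C k" for k unfolding C_def using bpos[of k] by simp
  have Cmono: "i \<le> j \<Longrightarrow> C i \<le> C j" for i j
    unfolding C_def using bmono bpos al0 by (intro powr_mono2') auto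
  define f where "f x = (\<Sum>i. C i * indicator (E i) x)" for x
  have fE: "f x = C k" if "x \<in> E k" for x k
  proof -
    have "(\<lambda>i. C i * indicator (E i) x) = (\<lambda>i. if i = k then C i else 0)"
      using that Edisj by (force simp: indicator_def)
    thus ?thesis unfolding f_def using sums_single[of k C] by (simp add: sums_iff)
  qed
  have fout: "f x = 0" if "\<forall>k. x \<notin> E k" for x
    using that by (simp add: f_def)
  have fmeas: "f \<in> borel_measurable \<mu>"
    unfolding f_def using Esets by measurable
  have distU: "distrib_fun \<mu> f (C k) \<le> 4/3 * b (Suc k)" for k
  proof -
    have "{x \<in> space \<mu>. C k < \<bar>f x\<bar>} \<subseteq> U k"
    proof
      fix x assume x: "x \<in> {x \<in> space \<mu>. C k < \<bar>f x\<bar>}"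
      show "x \<in> U k"
      proof (cases "\<exists>j. x \<in> E j")
        case True
        then obtain j where j: "x \<in> E j" by blast
        hence "C k < C j" using x fE Cpos by (smt (verit) mem_Collect_eq)
        hence "k < j" using Cmono by (meson not_le not_less)
        thus ?thesis using EU j by blast
      next
        case False thus ?thesis using x fout Cpos by (smt (verit) mem_Collect_eq)
      qed
    qed
    hence "distrib_fun \<mu> f (C k) \<le> measure \<mu> (U k)"
      unfolding distrib_fun_def using Usets by (intro finite_measure_mono) auto
    thus ?thesis using U_le[of k] by simp
  qed
  have distL: "2/3 * b k \<le> distrib_fun \<mu> f y" if "y < C k" for y k
  proof -
    have "E k \<subseteq> {x \<in> space \<mu>. y < \<bar>f x\<bar>}" using Esub fE that by auto
    moreover have "{x \<in> space \<mu>. y < \<bar>f x\<bar>} \<in> sets \<mu>" using fmeas by measurable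
    ultimately have "measure \<mu> (E k) \<le> distrib_fun \<mu> f y"
      unfolding distrib_fun_def by (intro finite_measure_mono)
    thus ?thesis using Emeas[of k] by simp
  qed
  have exn: "\<exists>n. 4/3 * b (Suc n) \<le> t" if t0: "0 < t" for t
  proof -
    obtain n where n: "(1/4::real) ^ n < 3/4 * t" using real_arch_pow_inv[of "3/4*t" "1/4"] t0 by auto
    have "4/3 * b (Suc n) \<le> 4/3 * (1/4) ^ n" using bS[of n] bsmall[of n] bpos[of n] by simp
    thus ?thesis using n by (intro exI[of _ n]) simp
  qed
  have nonempty: "\<exists>y>0. distrib_fun \<mu> f y \<le> t" if "0 < t" for t
    using exn[OF that] distU Cpos by (meson order_trans)
  define K where "K = (3/4 * b 0) powr (- \<alpha>)"
  have K1: "1 \<le> K" unfolding K_def using bpos[of 0] blt1[of 0] al0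
    by (intro one_le_powr_neg) auto
  have upper: "rearr \<mu> f t \<le> K * t powr (- \<alpha>)" if t: "0 < t" "t < 1" for t
  proof -
    define n where "n = (LEAST n. 4/3 * b (Suc n) \<le> t)"
    have n: "4/3 * b (Suc n) \<le> t" unfolding n_def using exn[OF t(1)] by (rule LeastI_ex)
    have r1: "rearr \<mu> f t \<le> C n"
      by (rule rearr_le[OF Cpos order_trans[OF distU n]])
    have tp: "1 \<le> t powr (- \<alpha>)" using t al0 by (intro one_le_powr_neg) auto
    show ?thesis
    proof (cases n)
      case 0
      have "C n \<le> K" unfolding C_def K_def 0 using bpos[of 0] al0 by (intro powr_mono2') auto
      also have "K \<le> K * t powr (- \<alpha>)" using K1 tp by simp
      finally show ?thesis using r1 by simp
    next
      case (Suc m)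
      have "\<not> 4/3 * b (Suc m) \<le> t" using Suc not_less_Least[of m "\<lambda>n. 4/3 * b (Suc n) \<le> t"]
        unfolding n_def by auto
      hence bt: "3/4 * t < b n" using Suc by simp
      have "C n \<le> (3/4 * t) powr (- \<alpha>)" unfolding C_def using bt t al0 by (intro powr_mono2') auto
      also have "\<dots> = (3/4) powr (- \<alpha>) * t powr (- \<alpha>)" using t powr_mult[of "3/4" t "-\<alpha>"] by simp
      also have "\<dots> \<le> K * t powr (- \<alpha>)" unfolding K_def using bpos[of 0] blt1[of 0] al0
        by (intro mult_right_mono powr_mono2') auto
      finally show ?thesis using r1 by simp
    qed
  qed
  have lower: "C k \<le> rearr \<mu> f t" if "0 < t" "t < 2/3 * b k" for t k
    using that by (intro rearr_ge nonempty) (auto intro: less_le_trans[OF _ distL])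
  have rnn: "0 \<le> rearr \<mu> f t" if "0 < t" for t using rearr_nonneg nonempty that by blast
  define \<delta> where "\<delta> = q * (1/p - \<alpha>)"
  have \<delta>0: "0 < \<delta>" unfolding \<delta>_def using al1 assms by simp
  define Q where "Q = q/p * (q-1) * (K powr q / \<delta>)"
  have bnd: "glz_integral \<mu> p q \<epsilon> f < \<infinity> \<and>
        ((q / p) * \<epsilon> * enn2real (glz_integral \<mu> p q \<epsilon> f)) powr (1 / (q - \<epsilon>)) \<le> max 1 Q"
    if e: "0 < \<epsilon> \<and> \<epsilon> < q - 1" for \<epsilon>
  proof -
    define \<gamma> where "\<gamma> = q - \<epsilon>"
    define c where "c = q/p - \<alpha> * \<gamma>"
    have \<gamma>: "1 < \<gamma>" "\<gamma> \<le> q" using e unfolding \<gamma>_def by auto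
    have c: "\<delta> \<le> c" unfolding c_def \<delta>_def using \<gamma> al0
      by (simp add: algebra_simps)
    have cpos: "0 < c" using c \<delta>0 by linarith
    have glz_le: "glz_integral \<mu> p q \<epsilon> f \<le> ennreal (K powr \<gamma> * (1 powr c / c))"
    proof -
      have "glz_integral \<mu> p q \<epsilon> f \<le> (\<integral>\<^sup>+ t \<in> {0<..<1}. ennreal (K powr \<gamma> * t powr (c - 1)) \<partial>lborel)"
        unfolding glz_integral_def \<gamma>_def[symmetric]
      proof (rule nn_integral_mono)
        fix t
        show "ennreal (t powr (q / p - 1) * rearr \<mu> f t powr \<gamma>) * indicator {0<..<1} t
          \<le> ennreal (K powr \<gamma> * t powr (c - 1)) * indicator {0<..<1} t"
        proof (cases "t \<in> {0<..<1}")
          case True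
          hence t: "0 < t" "t < 1" by auto
          have "rearr \<mu> f t powr \<gamma> \<le> (K * t powr (- \<alpha>)) powr \<gamma>"
            using upper[OF t] rnn[OF t(1)] \<gamma> by (intro powr_mono2) auto
          also have "\<dots> = K powr \<gamma> * t powr (- \<alpha> * \<gamma>)"
            using K1 t by (simp add: powr_mult powr_powr)
          finally have "t powr (q / p - 1) * rearr \<mu> f t powr \<gamma> \<le> t powr (q / p - 1) * (K powr \<gamma> * t powr (- \<alpha> * \<gamma>))"
            by (intro mult_left_mono) auto
          also have "\<dots> = K powr \<gamma> * t powr (c - 1)"
            unfolding c_def using t by (simp add: powr_add[symmetric] algebra_simps)
          finally show ?thesis using True by (simp add: ennreal_leI)
        qed auto
      qed
      also have "\<dots> = ennreal (K powr \<gamma> * (1 powr c / c))"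
        by (rule powr_integral_Ioo) (use cpos in auto)
      finally show ?thesis .
    qed
    hence fin: "glz_integral \<mu> p q \<epsilon> f < \<infinity>"
      using le_less_trans by fastforce
    have "enn2real (glz_integral \<mu> p q \<epsilon> f) \<le> K powr \<gamma> * (1 powr c / c)"
      using glz_le cpos K1 by (simp add: enn2real_leI)
    also have "\<dots> \<le> K powr q / \<delta>"
    proof -
      have "K powr \<gamma> \<le> K powr q" using K1 \<gamma> by (intro powr_mono) auto
      moreover have "1 / c \<le> 1 / \<delta>" using c \<delta>0 by (intro divide_left_mono) auto
      ultimately show ?thesis using K1 cpos \<delta>0
        by (simp add: divide_simps) (smt (verit) mult_mono powr_ge_zero)
    qed
    finally have G: "enn2real (glz_integral \<mu> p q \<epsilon> f) \<le> K powr q / \<delta>" .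
    have X: "(q / p) * \<epsilon> * enn2real (glz_integral \<mu> p q \<epsilon> f) \<le> Q"
      unfolding Q_def using e G assms p0
      by (intro mult_mono) (auto intro!: mult_nonneg_nonneg)
    show ?thesis
      using fin e assms p0
      by (intro conjI powr_le_max[OF _ X]) (auto intro!: mult_nonneg_nonneg)
  qed
  have inpq: "f \<in> grand_lorentz \<mu> p q"
    unfolding grand_lorentz_def using fmeas bnd by blast
  hence "f \<in> grand_lorentz \<mu> r s" using assms(7) by blast
  then obtain Cst where H: "\<And>\<epsilon>. 0 < \<epsilon> \<and> \<epsilon> < s - 1 \<Longrightarrow> glz_integral \<mu> r s \<epsilon> f < \<infinity>"
    unfolding grand_lorentz_def by blast
  have ra: "1 < r * \<alpha>" using al1 r0 by (simp add: field_simps)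
  have s1: "1 < s" using assms by linarith
  have s0: "0 < s - s / (r * \<alpha>)" using ra s1 by (simp add: field_simps)
  define \<epsilon> where "\<epsilon> = min (s - 1) (s - s / (r * \<alpha>)) / 2"
  have e0: "0 < \<epsilon>" "\<epsilon> < s - 1" using s0 s1 unfolding \<epsilon>_def by auto
  define \<gamma> where "\<gamma> = s - \<epsilon>"
  define \<beta> where "\<beta> = s / r"
  define e where "e = \<beta> - \<alpha> * \<gamma>"
  have \<gamma>0: "0 < \<gamma>" using e0 unfolding \<gamma>_def by auto
  have \<beta>0: "0 < \<beta>" using s1 r0 unfolding \<beta>_def by auto
  have eneg: "e < 0"
  proof -
    have "\<epsilon> \<le> (s - s / (r * \<alpha>)) / 2" unfolding \<epsilon>_def by auto
    hence "\<epsilon> < s - s / (r * \<alpha>)" using s0 by (auto simp: field_simps)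
    hence "s / (r * \<alpha>) < \<gamma>" unfolding \<gamma>_def by auto
    hence "s / r < \<alpha> * \<gamma>" using al0 r0 by (simp add: field_simps)
    thus ?thesis unfolding e_def \<beta>_def by simp
  qed
  have finrs: "glz_integral \<mu> r s \<epsilon> f < \<infinity>" using H e0 by blast
  define G where "G = enn2real (glz_integral \<mu> r s \<epsilon> f)"
  have GG: "glz_integral \<mu> r s \<epsilon> f = ennreal G"
    unfolding G_def using finrs by (simp add: ennreal_enn2real_if less_top)
  define c0 where "c0 = (2/3) powr \<beta> / \<beta>"
  have c0: "0 < c0" unfolding c0_def using \<beta>0 by simp
  have lowk: "c0 * b k powr e \<le> G" for k
  proof -
    define a where "a = 2/3 * b k"
    have a: "0 < a" "a < 1" unfolding a_def using bpos[of k] blt1[of k] by auto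
    have "ennreal (C k powr \<gamma> * (a powr \<beta> / \<beta>)) =
        (\<integral>\<^sup>+ t \<in> {0<..<a}. ennreal (C k powr \<gamma> * t powr (\<beta> - 1)) \<partial>lborel)"
      by (rule powr_integral_Ioo[symmetric]) (use a \<beta>0 in auto)
    also have "\<dots> \<le> glz_integral \<mu> r s \<epsilon> f"
      unfolding glz_integral_def \<gamma>_def[symmetric] \<beta>_def[symmetric]
    proof (rule nn_integral_mono)
      fix t
      show "ennreal (C k powr \<gamma> * t powr (\<beta> - 1)) * indicator {0<..<a} t
          \<le> ennreal (t powr (\<beta> - 1) * rearr \<mu> f t powr \<gamma>) * indicator {0<..<1} t"
      proof (cases "t \<in> {0<..<a}")
        case True
        hence t: "0 < t" "t < a" "t < 1" using a by auto
        have "C k \<le> rearr \<mu> f t" using lower[of t k] t unfolding a_def by auto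
        hence "C k powr \<gamma> \<le> rearr \<mu> f t powr \<gamma>"
          using Cpos[of k] \<gamma>0 by (intro powr_mono2) auto
        hence "C k powr \<gamma> * t powr (\<beta> - 1) \<le> t powr (\<beta> - 1) * rearr \<mu> f t powr \<gamma>"
          by (metis mult.commute mult_left_mono powr_ge_zero)
        thus ?thesis using True t by (simp add: ennreal_leI)
      qed auto
    qed
    finally have "C k powr \<gamma> * (a powr \<beta> / \<beta>) \<le> G"
      using GG G_def by (metis enn2real_nonneg ennreal_le_iff)
    moreover have "C k powr \<gamma> * (a powr \<beta> / \<beta>) = c0 * b k powr e"
    proof -
      have 1: "a powr \<beta> = (2/3) powr \<beta> * b k powr \<beta>"
        unfolding a_def using bpos[of k] powr_mult[of "2/3" "b k" \<beta>] by simp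
      have 2: "C k powr \<gamma> = b k powr (- (\<alpha> * \<gamma>))"
        unfolding C_def using bpos[of k] by (simp add: powr_powr)
      have 3: "b k powr e = b k powr \<beta> * b k powr (- (\<alpha> * \<gamma>))"
        unfolding e_def by (simp add: powr_add[symmetric])
      show ?thesis unfolding 1 2 3 c0_def by (simp add: algebra_simps)
    qed
    ultimately show ?thesis by simp
  qed
  define x where "x = (1/4::real) powr e"
  have x1: "1 < x"
  proof -
    have "4 powr e < 1" using eneg by (intro powr_less_one) auto
    moreover have "0 < (4::real) powr e" by simp
    ultimately show ?thesis unfolding x_def by (simp add: powr_divide)
  qed
  obtain k where k: "G / c0 < x ^ k" using real_arch_pow[OF x1] by blast
  have "x ^ k = ((1/4::real) ^ k) powr e"
    unfolding x_def by (simp add: powr_power powr_realpow[symmetric] powr_powr mult.commute)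
  also have "\<dots> \<le> b k powr e"
    using bsmall[of k] bpos[of k] eneg by (intro powr_mono2') auto
  finally have "x ^ k \<le> b k powr e" .
  hence "G < c0 * b k powr e" using k c0
    by (smt (verit, best) mult_left_mono pos_divide_less_eq mult.commute)
  thus False using lowk[of k] by simp
qed
end
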